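(* Let $\chi$ be an indecomposable character on $S(2^\infty)$ with GNS triple $(\pi,\mathcal{H},\xi)$. Let $A\subset X$ be nice and $s\in S(2^\infty)$ with $A\subset Fix(s)$. Then $\pi(s)P^A=P^A$.
   Context: Let $X=\{0,1\}^{\mathbb{N}}$; $X_n=\{0,1\}^n$; $S(2^n)$ the group of all bijections of $X_n$, acting on $X$ by $s((x,a))=(s(x),a)$; $S(2^\infty)=\bigcup_n S(2^n)$; $Fix(s)=\{x\in X:s(x)=x\}$. A character on a group $G$ is a function $\chi$ with $\chi(g_1g_2)=\chi(g_2g_1)$, $(\chi(g_ig_j^{-1}))_{i,j}$ positive semidefinite for all finite families, and $\chi(e)=1$; indecomposable means not a nontrivial convex combination of two distinct characters. GNS triple: $\pi$ a unitary representation on $\mathcal{H}$, $\xi$ a unit cyclic vector, $\chi(g)=(\pi(g)\xi,\xi)$. A set $A\subset X$ is nice if $A=C\times X$ for some $k$ and $C\subset X_k$ (sequences whose first $k$ coordinates lie in $C$). For such $A$ and $m>k$, $s^A_m$ fixes $A$ pointwise and flips the $m$-th coordinate of points outside $A$; $P^A$ is the weak operator limit of $\pi(s^A_m)$ as $m\to\infty$. *)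

theory Defs
  imports Complex_Main
begin

type_synonym pt = "nat \<Rightarrow> bool"          (* X = {0,1}^N, coordinates indexed from 0 *)
type_synonym perm = "pt \<Rightarrow> pt"

text \<open>X_n is modelled as bool lists of length n; a point x of X is the pair
 (map x [0..<n], tail).  An element of S(2^n) acts by permuting the first n coordinates block.\<close>

definition in_S2n :: "nat \<Rightarrow> perm \<Rightarrow> bool" where
  "in_S2n n s \<longleftrightarrow>
     (\<exists>\<sigma>. bij_betw \<sigma> {xs :: bool list. length xs = n} {xs. length xs = n} \<and>
          (\<forall>x. s x = (\<lambda>i. if i < n then \<sigma> (map x [0..<n]) ! i else x i)))"

definition S2inf :: "perm set" where
  "S2inf = {s. \<exists>n. in_S2n n s}"

definition Fix :: "perm \<Rightarrow> pt set" where
  "Fix s = {x. s x = x}"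

definition nice :: "pt set \<Rightarrow> bool" where
  "nice A \<longleftrightarrow> (\<exists>k C. C \<subseteq> {xs :: bool list. length xs = k} \<and> A = {x. map x [0..<k] \<in> C})"

text \<open>s^A_m: fixes A pointwise, flips the m-th coordinate (index m-1, 0-based) outside A.\<close>
definition sA :: "pt set \<Rightarrow> nat \<Rightarrow> perm" where
  "sA A m x = (if x \<in> A then x else x((m - 1) := \<not> x (m - 1)))"

definition is_character :: "(perm \<Rightarrow> complex) \<Rightarrow> bool" where
  "is_character \<chi> \<longleftrightarrow>
     (\<forall>g1\<in>S2inf. \<forall>g2\<in>S2inf. \<chi> (g1 \<circ> g2) = \<chi> (g2 \<circ> g1)) \<and>
     (\<forall>n (g :: nat \<Rightarrow> perm) (c :: nat \<Rightarrow> complex). (\<forall>i<n. g i \<in> S2inf) \<longrightarrow>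
        (let q = (\<Sum>i<n. \<Sum>j<n. cnj (c i) * \<chi> (g i \<circ> inv (g j)) * c j)
         in Im q = 0 \<and> Re q \<ge> 0)) \<and>
     \<chi> id = 1"

definition indecomposable_character :: "(perm \<Rightarrow> complex) \<Rightarrow> bool" where
  "indecomposable_character \<chi> \<longleftrightarrow> is_character \<chi> \<and>
     \<not> (\<exists>(t::real) \<chi>1 \<chi>2. 0 < t \<and> t < 1 \<and> is_character \<chi>1 \<and> is_character \<chi>2 \<and>
            (\<exists>g\<in>S2inf. \<chi>1 g \<noteq> \<chi>2 g) \<and>
            (\<forall>g\<in>S2inf. \<chi> g = of_real t * \<chi>1 g + of_real (1 - t) * \<chi>2 g))"

definition hnorm :: "('h \<Rightarrow> 'h \<Rightarrow> complex) \<Rightarrow> 'h \<Rightarrow> real" where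
  "hnorm ip x = sqrt (Re (ip x x))"

definition complex_hilbert :: "(complex \<Rightarrow> 'h::ab_group_add \<Rightarrow> 'h) \<Rightarrow> ('h \<Rightarrow> 'h \<Rightarrow> complex) \<Rightarrow> bool" where
  "complex_hilbert sc ip \<longleftrightarrow>
     Vector_Spaces.vector_space sc \<and>
     (\<forall>x y z. ip (x + y) z = ip x z + ip y z) \<and>
     (\<forall>c x y. ip (sc c x) y = c * ip x y) \<and>
     (\<forall>x y. ip y x = cnj (ip x y)) \<and>
     (\<forall>x. Re (ip x x) \<ge> 0) \<and>
     (\<forall>x. ip x x = 0 \<longrightarrow> x = 0) \<and>
     (\<forall>f :: nat \<Rightarrow> 'h. (\<forall>e>0. \<exists>N. \<forall>m\<ge>N. \<forall>n\<ge>N. hnorm ip (f m - f n) < e) \<longrightarrow>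
        (\<exists>l. (\<lambda>n. hnorm ip (f n - l)) \<longlonglongrightarrow> 0))"

definition unitary_op :: "(complex \<Rightarrow> 'h::ab_group_add \<Rightarrow> 'h) \<Rightarrow> ('h \<Rightarrow> 'h \<Rightarrow> complex) \<Rightarrow> ('h \<Rightarrow> 'h) \<Rightarrow> bool" where
  "unitary_op sc ip U \<longleftrightarrow>
     (\<forall>x y. U (x + y) = U x + U y) \<and> (\<forall>c x. U (sc c x) = sc c (U x)) \<and>
     surj U \<and> (\<forall>x y. ip (U x) (U y) = ip x y)"

definition unitary_rep :: "(complex \<Rightarrow> 'h::ab_group_add \<Rightarrow> 'h) \<Rightarrow> ('h \<Rightarrow> 'h \<Rightarrow> complex) \<Rightarrow> (perm \<Rightarrow> 'h \<Rightarrow> 'h) \<Rightarrow> bool" where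
  "unitary_rep sc ip \<pi> \<longleftrightarrow>
     (\<forall>g\<in>S2inf. unitary_op sc ip (\<pi> g)) \<and>
     (\<forall>g\<in>S2inf. \<forall>h\<in>S2inf. \<pi> (g \<circ> h) = \<pi> g \<circ> \<pi> h) \<and>
     \<pi> id = id"

definition GNS_triple :: "(complex \<Rightarrow> 'h::ab_group_add \<Rightarrow> 'h) \<Rightarrow> ('h \<Rightarrow> 'h \<Rightarrow> complex) \<Rightarrow>
     (perm \<Rightarrow> 'h \<Rightarrow> 'h) \<Rightarrow> 'h \<Rightarrow> (perm \<Rightarrow> complex) \<Rightarrow> bool" where
  "GNS_triple sc ip \<pi> \<xi> \<chi> \<longleftrightarrow>
     complex_hilbert sc ip \<and> unitary_rep sc ip \<pi> \<and>
     ip \<xi> \<xi> = 1 \<and>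
     (\<forall>v. \<forall>e>0. \<exists>n (g :: nat \<Rightarrow> perm) (c :: nat \<Rightarrow> complex). (\<forall>i<n. g i \<in> S2inf) \<and>
        hnorm ip (v - (\<Sum>i<n. sc (c i) (\<pi> (g i) \<xi>))) < e) \<and>
     (\<forall>g\<in>S2inf. \<chi> g = ip (\<pi> g \<xi>) \<xi>)"

definition weak_op_limit :: "('h \<Rightarrow> 'h \<Rightarrow> complex) \<Rightarrow> (nat \<Rightarrow> 'h \<Rightarrow> 'h) \<Rightarrow> ('h \<Rightarrow> 'h) \<Rightarrow> bool" where
  "weak_op_limit ip T P \<longleftrightarrow> (\<forall>u v. (\<lambda>m. ip (T m u) v) \<longlonglongrightarrow> ip (P u) v)"

end

theory Submission imports Defs "HOL-Combinatorics.Permutations" begin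


locale hs =
  fixes sc :: "complex \<Rightarrow> 'h::ab_group_add \<Rightarrow> 'h" and ip :: "'h \<Rightarrow> 'h \<Rightarrow> complex"
  assumes H: "complex_hilbert sc ip"
begin

lemma add_l: "ip (x + y) z = ip x z + ip y z" using H unfolding complex_hilbert_def by blast
lemma sc_l: "ip (sc c x) y = c * ip x y" using H unfolding complex_hilbert_def by blast
lemma cnj_ip: "ip y x = cnj (ip x y)" using H unfolding complex_hilbert_def by blast
lemma pos: "Re (ip x x) \<ge> 0" using H unfolding complex_hilbert_def by blast
lemma def0: "ip x x = 0 \<Longrightarrow> x = 0" using H unfolding complex_hilbert_def by blast
lemma vs: "Vector_Spaces.vector_space sc" using H unfolding complex_hilbert_def by blast

lemma zero_l[simp]: "ip 0 z = 0" using add_l[of 0 0 z] by simp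
lemma neg_l: "ip (- x) z = - ip x z" using add_l[of x "-x" z] by (simp add: eq_neg_iff_add_eq_0 add.commute)
lemma diff_l: "ip (x - y) z = ip x z - ip y z" using add_l[of x "-y" z] neg_l by simp
lemma add_r: "ip z (x + y) = ip z x + ip z y" by (metis add_l cnj_ip complex_cnj_add)
lemma diff_r: "ip z (x - y) = ip z x - ip z y" by (metis diff_l cnj_ip complex_cnj_diff)
lemma zero_r[simp]: "ip z 0 = 0" by (metis cnj_ip zero_l complex_cnj_zero)
lemma sc_r: "ip x (sc c y) = cnj c * ip x y" by (metis sc_l cnj_ip complex_cnj_mult)
lemma sum_l: "ip (\<Sum>i\<in>I. f i) z = (\<Sum>i\<in>I. ip (f i) z)"
  by (induction I rule: infinite_finite_induct) (auto simp: add_l)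
lemma sum_r: "ip z (\<Sum>i\<in>I. f i) = (\<Sum>i\<in>I. ip z (f i))"
  by (induction I rule: infinite_finite_induct) (auto simp: add_r)
lemma self_real: "ip x x = complex_of_real (Re (ip x x))"
  by (metis cnj_ip complex_is_Real_iff Reals_cnj_iff of_real_Re)

lemma ext0: "(\<And>v. ip x v = 0) \<Longrightarrow> x = 0" using def0 by blast
lemma ext_eq: "(\<And>v. ip x v = ip y v) \<Longrightarrow> x = y"
  using ext0[of "x - y"] diff_l by (simp add: right_minus_eq)

lemma sc_diff: "sc c x - sc c y = sc c (x - y)"
  by (rule ext_eq) (simp add: diff_l sc_l algebra_simps)
lemma sc_minus: "x - sc c y = x + sc (- c) y"
  by (rule ext_eq) (simp add: diff_l add_l sc_l algebra_simps)

lemma CS: "(cmod (ip x y))^2 \<le> Re (ip x x) * Re (ip y y)"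
proof (cases "y = 0")
  case True then show ?thesis by simp
next
  case False
  define b where "b = Re (ip y y)"
  have yy: "ip y y = of_real b" using self_real b_def by simp
  have bpos: "b > 0" using pos[of y] def0[of y] False yy b_def by (metis less_eq_real_def of_real_0)
  define t where "t = ip x y / of_real b"
  define nn where "nn = (cmod (ip x y))^2"
  have nq: "ip x y * cnj (ip x y) = of_real nn" using complex_norm_square[of "ip x y"] unfolding nn_def by simp
  have "t * cnj t * ip y y = ip x y * cnj (ip x y) / of_real b"
    using bpos by (simp add: t_def yy)
  also have "\<dots> = of_real (nn / b)" by (simp add: nq)
  finally have e1: "t * cnj t * ip y y = of_real (nn / b)" .
  have e2: "cnj t * ip x y = of_real (nn / b)"
    using bpos by (simp add: t_def nq[symmetric] mult.commute)
  have e3: "t * ip y x = of_real (nn / b)"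
    using bpos by (simp add: t_def cnj_ip[of y x] nq[symmetric])
  have "0 \<le> Re (ip (x - sc t y) (x - sc t y))" by (rule pos)
  also have "ip (x - sc t y) (x - sc t y) = ip x x - cnj t * ip x y - t * ip y x + t * cnj t * ip y y"
    by (simp add: diff_l diff_r sc_l sc_r algebra_simps)
  also have "ip x x - cnj t * ip x y - t * ip y x + t * cnj t * ip y y = ip x x - of_real (nn / b)"
    by (simp add: e1 e2 e3)
  finally have "0 \<le> Re (ip x x) - nn / b" by simp
  then show ?thesis using bpos unfolding b_def[symmetric] nn_def[symmetric] by (simp add: field_simps)
qed

lemma CS2: "cmod (ip x y) \<le> hnorm ip x * hnorm ip y"
proof -
  have "cmod (ip x y) = sqrt ((cmod (ip x y))^2)" by simp
  also have "\<dots> \<le> sqrt (Re (ip x x) * Re (ip y y))" using CS real_sqrt_le_mono by blast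
  also have "\<dots> = hnorm ip x * hnorm ip y" by (simp add: hnorm_def real_sqrt_mult)
  finally show ?thesis .
qed

end



definition pre :: "nat \<Rightarrow> pt \<Rightarrow> bool list" where "pre n x = map x [0..<n]"
definition extl :: "bool list \<Rightarrow> pt" where "extl xs i = (if i < length xs then xs ! i else False)"
definition loc :: "nat \<Rightarrow> perm \<Rightarrow> bool" where
  "loc n s \<longleftrightarrow> (\<forall>x i. n \<le> i \<longrightarrow> s x i = x i) \<and> (\<forall>x y. (\<forall>i<n. x i = y i) \<longrightarrow> (\<forall>i<n. s x i = s y i))"
definition lift :: "nat \<Rightarrow> (bool list \<Rightarrow> bool list) \<Rightarrow> perm" where
  "lift n \<sigma> x = (\<lambda>i. if i < n then \<sigma> (pre n x) ! i else x i)"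

lemma pre_len[simp]: "length (pre n x) = n" by (simp add: pre_def)
lemma pre_nth[simp]: "i < n \<Longrightarrow> pre n x ! i = x i" by (simp add: pre_def)
lemma pre_eq: "pre n x = pre n y \<longleftrightarrow> (\<forall>i<n. x i = y i)"
  by (auto simp: pre_def)

lemma in_S2n_lift: "in_S2n n s \<longleftrightarrow> (\<exists>\<sigma>. bij_betw \<sigma> {xs. length xs = n} {xs. length xs = n} \<and> s = lift n \<sigma>)"
  proof -
  have "\<And>\<sigma>. s = lift n \<sigma> \<longleftrightarrow> (\<forall>x. s x = (\<lambda>i. if i < n then \<sigma> (map x [0..<n]) ! i else x i))"
    by (simp add: lift_def pre_def fun_eq_iff)
  then show ?thesis unfolding in_S2n_def by simp
qed

lemma lift_loc:
  assumes "\<And>xs. length xs = n \<Longrightarrow> length (\<sigma> xs) = n"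
  shows "loc n (lift n \<sigma>)"
  unfolding loc_def lift_def by (auto simp: pre_eq[symmetric])

lemma lift_comp:
  assumes "\<And>xs. length xs = n \<Longrightarrow> length (\<tau> xs) = n"
  shows "lift n (\<sigma> \<circ> \<tau>) = lift n \<sigma> \<circ> lift n \<tau>"
proof -
  have "pre n (lift n \<tau> x) = \<tau> (pre n x)" for x
    using assms[of "pre n x"] by (intro nth_equalityI) (auto simp: lift_def)
  then show ?thesis by (auto simp: fun_eq_iff lift_def)
qed

lemma lift_id: "lift n id = id"
  by (auto simp: fun_eq_iff lift_def)

lemma lift_cong: "(\<And>xs. length xs = n \<Longrightarrow> \<sigma> xs = \<sigma>' xs) \<Longrightarrow> lift n \<sigma> = lift n \<sigma>'"
  by (auto simp: fun_eq_iff lift_def)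

lemma in_S2n_bij:
  assumes "in_S2n n s" shows "bij s" "loc n s"
proof -
  obtain \<sigma> where b: "bij_betw \<sigma> {xs. length xs = n} {xs. length xs = n}" and s: "s = lift n \<sigma>"
    using assms in_S2n_lift by blast
  have len: "length xs = n \<Longrightarrow> length (\<sigma> xs) = n" for xs using b by (auto simp: bij_betw_def)
  show "loc n s" using s lift_loc len by blast
  show "bij s"
  proof (rule bijI)
    show "inj s"
    proof (rule injI)
      fix x y assume e: "s x = s y"
      have "\<forall>i<n. \<sigma> (pre n x) ! i = \<sigma> (pre n y) ! i"
        using e unfolding s lift_def fun_eq_iff by metis
      then have "\<sigma> (pre n x) = \<sigma> (pre n y)"
        using len by (intro nth_equalityI) auto
      then have "pre n x = pre n y" using b by (auto simp: bij_betw_def inj_on_def)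
      moreover have "\<forall>i\<ge>n. x i = y i"
      proof (intro allI impI)
        fix i assume "n \<le> i"
        then have "s x i = x i" "s y i = y i" by (simp_all add: s lift_def)
        then show "x i = y i" using e by simp
      qed
      ultimately show "x = y" unfolding pre_eq fun_eq_iff by (meson not_le)
    qed
    show "surj s"
    proof -
      { fix y
        obtain xs where xs: "length xs = n" "\<sigma> xs = pre n y"
        proof -
          have "pre n y \<in> \<sigma> ` {xs. length xs = n}" using b by (simp add: bij_betw_def)
          then obtain xs where "xs \<in> {xs. length xs = n}" "pre n y = \<sigma> xs" by (rule imageE)
          then show ?thesis using that by simp
        qed
        define x where "x = (\<lambda>i. if i < n then xs ! i else y i)"
        have "pre n x = xs" using xs by (intro nth_equalityI) (auto simp: x_def)
        then have "s x = y" using xs by (auto simp: s lift_def fun_eq_iff x_def)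
        then have "y \<in> range s" by blast }
      then show ?thesis by blast
    qed
  qed
qed

lemma loc_inj_in_S2n:
  assumes l: "loc n s" and i: "inj s"
  shows "in_S2n n s"
proof -
  define \<sigma> where "\<sigma> xs = pre n (s (extl xs))" for xs
  have e1: "s = lift n \<sigma>"
  proof (rule ext)
    fix x
    have "\<forall>i<n. extl (pre n x) i = x i" by (simp add: extl_def)
    then have "\<forall>i<n. s (extl (pre n x)) i = s x i" using l unfolding loc_def by blast
    then show "s x = lift n \<sigma> x" using l unfolding lift_def \<sigma>_def loc_def fun_eq_iff
      by (simp add: pre_def)
  qed
  have io: "inj_on \<sigma> {xs. length xs = n}"
  proof (rule inj_onI)
    fix xs ys assume a: "xs \<in> {xs. length xs = n}" "ys \<in> {xs. length xs = n}" "\<sigma> xs = \<sigma> ys"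
    have "s (extl xs) = s (extl ys)"
    proof (rule ext)
      fix i show "s (extl xs) i = s (extl ys) i"
      proof (cases "i < n")
        case True then show ?thesis using a(3) unfolding \<sigma>_def pre_eq by blast
      next
        case False
        have "s (extl xs) i = extl xs i" "s (extl ys) i = extl ys i"
          using l False unfolding loc_def by simp_all
        moreover have "extl xs i = extl ys i" using a(1,2) False by (simp add: extl_def)
        ultimately show ?thesis by simp
      qed
    qed
    then have "extl xs = extl ys" using i by (simp add: inj_eq)
    then have ee: "extl xs = extl ys" .
    have "\<forall>i<n. xs ! i = ys ! i"
    proof (intro allI impI)
      fix i assume "i < n"
      have "extl xs i = extl ys i" using ee by simp
      moreover have "length xs = n" "length ys = n" using a(1,2) by simp_all
      ultimately show "xs ! i = ys ! i" using \<open>i<n\<close> unfolding extl_def by simp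
    qed
    then show "xs = ys" using a by (intro nth_equalityI) auto
  qed
  have im: "\<sigma> ` {xs. length xs = n} \<subseteq> {xs. length xs = n}" by (auto simp: \<sigma>_def)
  have "finite {xs :: bool list. length xs = n}" using finite_lists_length_eq[of "UNIV::bool set" n] by simp
  then have "\<sigma> ` {xs. length xs = n} = {xs. length xs = n}" using endo_inj_surj[OF _ im io] by blast
  then have "bij_betw \<sigma> {xs. length xs = n} {xs. length xs = n}" using io by (simp add: bij_betw_def)
  then show ?thesis using e1 in_S2n_lift by blast
qed

lemma loc_mono: assumes "loc n s" "n \<le> m" shows "loc m s"
  unfolding loc_def
proof (intro conjI allI impI)
  fix x i assume "m \<le> i" then show "s x i = x i" using assms unfolding loc_def by simp
next
  fix x y :: pt and i :: nat assume a: "\<forall>i<m. x i = y i" "i < m"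
  show "s x i = s y i"
  proof (cases "i < n")
    case True then show ?thesis using a assms unfolding loc_def by simp
  next
    case False then show ?thesis using a assms unfolding loc_def by simp
  qed
qed

lemma S2inf_iff: "s \<in> S2inf \<longleftrightarrow> (\<exists>n. loc n s \<and> bij s)"
  unfolding S2inf_def using in_S2n_bij loc_inj_in_S2n bij_is_inj by blast

lemma S2inf_I: "loc n s \<Longrightarrow> inj s \<Longrightarrow> s \<in> S2inf"
  unfolding S2inf_def using loc_inj_in_S2n by blast

lemma S2inf_invol: "loc n s \<Longrightarrow> s \<circ> s = id \<Longrightarrow> s \<in> S2inf"
  proof -
  assume a: "loc n s" "s \<circ> s = id"
  have "\<And>x. s (s x) = x" using a(2) by (simp add: fun_eq_iff)
  then have "inj s" by (metis injI)
  then show ?thesis using a S2inf_I by blast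
qed

lemma loc_comp: "loc n s \<Longrightarrow> loc n t \<Longrightarrow> loc n (s \<circ> t)"
  unfolding loc_def by simp

lemma S2inf_comp: assumes "s \<in> S2inf" "t \<in> S2inf" shows "s \<circ> t \<in> S2inf"
proof -
  obtain n m where "loc n s" "bij s" "loc m t" "bij t" using assms S2inf_iff by blast
  then have "loc (max n m) s" "loc (max n m) t" using loc_mono by auto
  then show ?thesis using S2inf_I[of "max n m"] loc_comp \<open>bij s\<close> \<open>bij t\<close>
    by (meson bij_comp bij_is_inj)
qed

lemma S2inf_id: "id \<in> S2inf" using S2inf_I[of 0 id] by (simp add: loc_def)

lemma S2inf_inv: assumes "s \<in> S2inf" shows "inv s \<in> S2inf" "inv s \<circ> s = id" "s \<circ> inv s = id"
proof -
  obtain n where l: "loc n s" and b: "bij s" using assms S2inf_iff by blast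
  show "inv s \<circ> s = id" "s \<circ> inv s = id" using b
    by (auto simp: fun_eq_iff bij_is_inj bij_is_surj surj_f_inv_f)
  have si: "s (inv s x) = x" for x using b by (simp add: bij_is_surj surj_f_inv_f)
  have "loc n (inv s)"
    unfolding loc_def
  proof (intro conjI allI impI)
    fix x i assume "n \<le> i"
    then show "inv s x i = x i" using l si[of x] unfolding loc_def by metis
  next
    fix x y :: pt and i :: nat assume xy: "\<forall>i<n. x i = y i" and i: "i < n"
    define z :: pt where "z = (\<lambda>j. if j < n then (inv s x) j else (inv s y) j)"
    have "s z = y"
    proof
      fix j show "s z j = y j"
      proof (cases "j < n")
        case True
        have "\<forall>i<n. z i = inv s x i" by (simp add: z_def)
        then have "s z j = s (inv s x) j" using l True unfolding loc_def by blast
        then show ?thesis using si xy True by simp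
      next
        case False
        then have "s z j = z j" using l unfolding loc_def by simp
        also have "\<dots> = inv s y j" using False by (simp add: z_def)
        also have "\<dots> = s (inv s y) j" using l False unfolding loc_def by simp
        finally show ?thesis using si by simp
      qed
    qed
    then have "z = inv s y" using b by (metis bij_inv_eq_iff)
    then show "inv s x i = inv s y i" using i by (metis z_def)
  qed
  then show "inv s \<in> S2inf" using S2inf_I b by (meson bij_imp_bij_inv bij_is_inj)
qed




locale setting = hs sc ip for sc :: "complex \<Rightarrow> 'h::ab_group_add \<Rightarrow> 'h" and ip +
  fixes \<pi> :: "perm \<Rightarrow> 'h \<Rightarrow> 'h" and \<xi> :: 'h and \<chi> :: "perm \<Rightarrow> complex"
    and A :: "pt set" and PA :: "'h \<Rightarrow> 'h" and k :: nat and C :: "bool list set"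
  assumes gns: "GNS_triple sc ip \<pi> \<xi> \<chi>"
    and chi: "is_character \<chi>"
    and Adef: "A = {x. pre k x \<in> C}"
    and wl: "weak_op_limit ip (\<lambda>m. \<pi> (sA A m)) PA"
begin

lemma rep: "unitary_rep sc ip \<pi>" using gns unfolding GNS_triple_def by blast
lemma U: "g \<in> S2inf \<Longrightarrow> unitary_op sc ip (\<pi> g)" using rep unfolding unitary_rep_def by blast
lemma pcomp: "g \<in> S2inf \<Longrightarrow> h \<in> S2inf \<Longrightarrow> \<pi> (g \<circ> h) = \<pi> g \<circ> \<pi> h"
  using rep unfolding unitary_rep_def by blast
lemma pcomp': "g \<in> S2inf \<Longrightarrow> h \<in> S2inf \<Longrightarrow> \<pi> (g \<circ> h) x = \<pi> g (\<pi> h x)"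
  using pcomp by simp
lemma pid: "\<pi> id = id" using rep unfolding unitary_rep_def by blast
lemma chi_ip: "g \<in> S2inf \<Longrightarrow> \<chi> g = ip (\<pi> g \<xi>) \<xi>" using gns unfolding GNS_triple_def by blast
lemma trace: "g \<in> S2inf \<Longrightarrow> h \<in> S2inf \<Longrightarrow> \<chi> (g \<circ> h) = \<chi> (h \<circ> g)"
  using chi unfolding is_character_def by blast
lemma dense: "e > 0 \<Longrightarrow> \<exists>n (g :: nat \<Rightarrow> perm) c. (\<forall>i<n. g i \<in> S2inf) \<and> hnorm ip (v - (\<Sum>i<n. sc (c i) (\<pi> (g i) \<xi>))) < e"
proof -
  assume "e > 0"
  moreover have "\<forall>v e. 0 < e \<longrightarrow> (\<exists>n (g :: nat \<Rightarrow> perm) c. (\<forall>i<n. g i \<in> S2inf) \<and> hnorm ip (v - (\<Sum>i<n. sc (c i) (\<pi> (g i) \<xi>))) < e)"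
    using gns unfolding GNS_triple_def by (elim conjE) assumption
  ultimately show ?thesis by blast
qed
lemma wlim: "(\<lambda>m. ip (\<pi> (sA A m) u) v) \<longlonglongrightarrow> ip (PA u) v" using wl unfolding weak_op_limit_def by blast

lemma U_add: "g \<in> S2inf \<Longrightarrow> \<pi> g (x + y) = \<pi> g x + \<pi> g y" using U unfolding unitary_op_def by blast
lemma U_sc: "g \<in> S2inf \<Longrightarrow> \<pi> g (sc c x) = sc c (\<pi> g x)" using U unfolding unitary_op_def by blast
lemma U_ip: "g \<in> S2inf \<Longrightarrow> ip (\<pi> g x) (\<pi> g y) = ip x y" using U unfolding unitary_op_def by blast
lemma U_0: "g \<in> S2inf \<Longrightarrow> \<pi> g 0 = 0" using U_add[of g 0 0] by simp
lemma U_neg: "g \<in> S2inf \<Longrightarrow> \<pi> g (- x) = - \<pi> g x"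
  using U_add[of g x "-x"] U_0 by (simp add: eq_neg_iff_add_eq_0 add.commute)
lemma U_diff: "g \<in> S2inf \<Longrightarrow> \<pi> g (x - y) = \<pi> g x - \<pi> g y"
  using U_add[of g x "-y"] U_neg by simp
lemma U_sum: "g \<in> S2inf \<Longrightarrow> \<pi> g (\<Sum>i\<in>I. f i) = (\<Sum>i\<in>I. \<pi> g (f i))"
  by (induction I rule: infinite_finite_induct) (auto simp: U_0 U_add)
lemma U_norm: "g \<in> S2inf \<Longrightarrow> hnorm ip (\<pi> g x) = hnorm ip x" by (simp add: hnorm_def U_ip)

lemma invol_pi: assumes "g \<in> S2inf" "g \<circ> g = id" shows "\<pi> g (\<pi> g x) = x"
  using pcomp'[OF assms(1,1), of x] assms(2) pid by simp
lemma invol_adj: assumes "g \<in> S2inf" "g \<circ> g = id" shows "ip (\<pi> g x) y = ip x (\<pi> g y)"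
  using U_ip[OF assms(1), of "\<pi> g x" y] invol_pi[OF assms] by simp

lemma L: assumes X: "X \<in> S2inf" and y: "y \<in> S2inf"
  shows "ip (\<pi> (X \<circ> y) \<xi>) (\<pi> y \<xi>) = \<chi> X"
proof -
  have iy: "inv y \<in> S2inf" "inv y \<circ> y = id" "y \<circ> inv y = id" using S2inf_inv[OF y] by auto
  have Xy: "X \<circ> y \<in> S2inf" using S2inf_comp X y by blast
  have "ip (\<pi> (X \<circ> y) \<xi>) (\<pi> y \<xi>) = ip (\<pi> (inv y) (\<pi> (X \<circ> y) \<xi>)) (\<pi> (inv y) (\<pi> y \<xi>))"
    using U_ip[OF iy(1)] by simp
  also have "\<dots> = ip (\<pi> (inv y \<circ> (X \<circ> y)) \<xi>) \<xi>"
    using pcomp'[OF iy(1) Xy] pcomp'[OF iy(1) y] iy(2) pid by simp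
  also have "\<dots> = \<chi> (inv y \<circ> (X \<circ> y))" using chi_ip S2inf_comp[OF iy(1) Xy] by simp
  also have "\<dots> = \<chi> ((X \<circ> y) \<circ> inv y)" using trace[OF iy(1) Xy] .
  also have "(X \<circ> y) \<circ> inv y = X" using iy(3) by (simp add: comp_assoc)
  finally show ?thesis .
qed

abbreviation g where "g m \<equiv> sA A m"

lemma A_cong: "x \<in> A \<Longrightarrow> (\<forall>i<k. x i = y i) \<Longrightarrow> y \<in> A"
  unfolding Adef using pre_eq by (metis mem_Collect_eq)

lemma A_upd: "k \<le> j \<Longrightarrow> x(j := v) \<in> A \<longleftrightarrow> x \<in> A"
  using A_cong[of x "x(j:=v)"] A_cong[of "x(j:=v)" x] by auto

lemma g_notA: "x \<notin> A \<Longrightarrow> g m x = x(m - 1 := \<not> x (m - 1))" by (simp add: sA_def)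
lemma g_A: "x \<in> A \<Longrightarrow> g m x = x" by (simp add: sA_def)

lemma g_invol: assumes "k < m" shows "g m \<circ> g m = id"
proof
  fix x show "(g m \<circ> g m) x = id x"
  proof (cases "x \<in> A")
    case True then show ?thesis by (simp add: g_A)
  next
    case False
    then have "x(m - 1 := \<not> x (m - 1)) \<notin> A" using A_upd assms by simp
    then show ?thesis using False by (simp add: g_notA)
  qed
qed

lemma g_loc: assumes "k < m" shows "loc m (g m)"
  unfolding loc_def
proof (intro conjI allI impI)
  fix x :: pt and i :: nat assume "m \<le> i" then show "g m x i = x i" using assms by (auto simp: sA_def)
next
  fix x y :: pt and i :: nat assume a: "\<forall>i<m. x i = y i" "i < m"
  have "x \<in> A \<longleftrightarrow> y \<in> A" using A_cong a(1) assms by (metis less_trans)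
  then show "g m x i = g m y i" using a by (simp add: sA_def)
qed

lemma g_S2: "k < m \<Longrightarrow> g m \<in> S2inf" using S2inf_invol g_loc g_invol by blast

lemma PA_lim: "ip (PA u) v = lim (\<lambda>m. ip (\<pi> (g m) u) v)" using wlim limI by metis

lemma ev_g: "eventually (\<lambda>m. g m \<in> S2inf) sequentially"
  using g_S2 eventually_sequentially by (metis Suc_le_eq)

lemma PA_diff: "ip (PA (x - y)) v = ip (PA x) v - ip (PA y) v"
proof -
  have "(\<lambda>m. ip (\<pi> (g m) (x - y)) v) \<longlonglongrightarrow> ip (PA x) v - ip (PA y) v"
  proof (rule Lim_transform_eventually[OF tendsto_diff[OF wlim wlim]])
    show "\<forall>\<^sub>F m in sequentially. ip (\<pi> (g m) x) v - ip (\<pi> (g m) y) v = ip (\<pi> (g m) (x - y)) v"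
      using ev_g by eventually_elim (simp add: U_diff diff_l)
  qed
  then show ?thesis using wlim LIMSEQ_unique by blast
qed

lemma PA_comb: "ip (PA (\<Sum>i<n. sc (c i) (f i))) v = (\<Sum>i<n. c i * ip (PA (f i)) v)"
proof -
  have "(\<lambda>m. ip (\<pi> (g m) (\<Sum>i<n. sc (c i) (f i))) v) \<longlonglongrightarrow> (\<Sum>i<n. c i * ip (PA (f i)) v)"
  proof (rule Lim_transform_eventually[OF tendsto_sum[OF tendsto_mult_left[OF wlim]]])
    show "\<forall>\<^sub>F m in sequentially. (\<Sum>i<n. c i * ip (\<pi> (g m) (f i)) v) = ip (\<pi> (g m) (\<Sum>i<n. sc (c i) (f i))) v"
      using ev_g by eventually_elim (simp add: U_sum U_sc sum_l sc_l)
  qed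
  then show ?thesis using wlim LIMSEQ_unique by blast
qed

lemma PA_bound: "cmod (ip (PA x) v) \<le> hnorm ip x * hnorm ip v"
proof -
  have "(\<lambda>m. cmod (ip (\<pi> (g m) x) v)) \<longlonglongrightarrow> cmod (ip (PA x) v)" using wlim tendsto_norm by blast
  moreover have "\<exists>N. \<forall>m\<ge>N. cmod (ip (\<pi> (g m) x) v) \<le> hnorm ip x * hnorm ip v"
  proof (intro exI allI impI)
    fix m assume "Suc k \<le> m"
    then have "g m \<in> S2inf" using g_S2 by simp
    then show "cmod (ip (\<pi> (g m) x) v) \<le> hnorm ip x * hnorm ip v" using CS2 U_norm by metis
  qed
  ultimately show ?thesis by (rule LIMSEQ_le_const2)
qed

end



locale tsetting = setting +
  fixes n :: nat and a b :: "bool list"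
  assumes la: "length a = n" and lb: "length b = n"
    and na: "\<And>x. x \<in> A \<Longrightarrow> pre n x \<noteq> a" and nb: "\<And>x. x \<in> A \<Longrightarrow> pre n x \<noteq> b"
begin

definition tau where "tau = lift n (transpose a b)"

lemma tlen: "length xs = n \<Longrightarrow> length (transpose a b xs) = n"
  by (simp add: transpose_def la lb)

lemma pre_tau: "pre n (tau x) = transpose a b (pre n x)"
  by (intro nth_equalityI) (auto simp: tau_def lift_def tlen)

lemma tau_hi: "n \<le> i \<Longrightarrow> tau x i = x i" by (simp add: tau_def lift_def)
lemma tau_lo: "i < n \<Longrightarrow> tau x i = transpose a b (pre n x) ! i" by (simp add: tau_def lift_def)

lemma tau_tau: "tau (tau x) = x"
proof
  fix i show "tau (tau x) i = x i"
  proof (cases "i < n")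
    case True then show ?thesis by (simp add: tau_lo pre_tau)
  next
    case False then show ?thesis by (simp add: tau_hi)
  qed
qed

lemma tau_invol: "tau \<circ> tau = id" by (simp add: fun_eq_iff tau_tau)
lemma tau_loc: "loc n tau" unfolding tau_def using lift_loc tlen by blast
lemma tau_S2: "tau \<in> S2inf" using S2inf_invol tau_loc tau_invol by blast

lemma tau_A: assumes "x \<in> A" shows "tau x = x"
proof
  fix i
  have "transpose a b (pre n x) = pre n x" using na[OF assms] nb[OF assms] by simp
  then show "tau x i = x i" by (cases "i < n") (simp_all add: tau_lo tau_hi)
qed

lemma tau_notA: "x \<notin> A \<Longrightarrow> tau x \<notin> A" using tau_A tau_tau by metis

lemma tau_upd: assumes "n \<le> j" shows "tau (x(j := v)) = (tau x)(j := v)"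
proof
  fix i
  have "pre n (x(j := v)) = pre n x" using assms by (simp add: pre_eq)
  then show "tau (x(j := v)) i = ((tau x)(j := v)) i" using assms
    by (cases "i < n") (auto simp: tau_lo tau_hi)
qed

lemma tau_g: assumes "n < m" "k < m" shows "tau (g m x) = g m (tau x)"
proof (cases "x \<in> A")
  case True then show ?thesis by (simp add: g_A tau_A)
next
  case False
  then show ?thesis using tau_notA[OF False] assms
    by (simp add: g_notA tau_upd tau_hi)
qed

lemma tau_g': "n < m \<Longrightarrow> k < m \<Longrightarrow> tau \<circ> g m = g m \<circ> tau" using tau_g by auto

definition dd where "dd l x = (if x (l - 1) then tau x else x)"

lemma dd_loc: assumes "n < l" shows "loc l (dd l)"
proof -
  have tl: "loc l tau" using loc_mono tau_loc assms by simp
  show ?thesis unfolding loc_def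
  proof (intro conjI allI impI)
    fix x :: pt and i assume "l \<le> i" then show "dd l x i = x i" using tl unfolding loc_def dd_def by simp
  next
    fix x y :: pt and i assume a: "\<forall>i<l. x i = y i" "i < l"
    have "x (l - 1) = y (l - 1)" using a assms by simp
    moreover have "tau x i = tau y i" using tl a unfolding loc_def by blast
    ultimately show "dd l x i = dd l y i" using a unfolding dd_def by simp
  qed
qed

lemma dd_invol: assumes "n < l" shows "dd l \<circ> dd l = id"
proof
  fix x have "tau x (l - 1) = x (l - 1)" using assms tau_hi by simp
  then show "(dd l \<circ> dd l) x = id x" by (simp add: dd_def tau_tau)
qed

lemma dd_S2: "n < l \<Longrightarrow> dd l \<in> S2inf" using S2inf_invol dd_loc dd_invol by blast

lemma G_flip: assumes "x \<notin> A" "k < l" "k < j" "l \<noteq> j"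
  shows "g l (g j x) (l - 1) = (\<not> x (l - 1))"
proof -
  have "x(j - 1 := \<not> x (j - 1)) \<notin> A" using assms A_upd by simp
  then show ?thesis using assms by (simp add: g_notA)
qed

lemma GA: "x \<in> A \<Longrightarrow> g l (g j x) = x" by (simp add: g_A)

lemma dd_conj: assumes "n < l" "n < j" "k < l" "k < j" "l \<noteq> j"
  shows "dd l \<circ> (g l \<circ> g j) \<circ> dd l = tau \<circ> (g l \<circ> g j)"
proof
  fix x
  have comm: "g l (g j (tau y)) = tau (g l (g j y))" for y using tau_g assms by simp
  show "(dd l \<circ> (g l \<circ> g j) \<circ> dd l) x = (tau \<circ> (g l \<circ> g j)) x"
  proof (cases "x \<in> A")
    case True
    then show ?thesis by (simp add: dd_def tau_A GA)
  next
    case False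
    have f1: "g l (g j x) (l - 1) = (\<not> x (l - 1))" using G_flip False assms by simp
    have f2: "g l (g j (tau x)) (l - 1) = (\<not> x (l - 1))"
      using G_flip[OF tau_notA[OF False]] assms tau_hi by simp
    show ?thesis
    proof (cases "x (l - 1)")
      case True then show ?thesis using f2 comm by (simp add: dd_def)
    next
      case False then show ?thesis using f1 by (simp add: dd_def)
    qed
  qed
qed

end



context tsetting begin

lemma chi_tauG: assumes "n < l" "n < j" "k < l" "k < j" "l \<noteq> j"
  shows "\<chi> (tau \<circ> (g l \<circ> g j)) = \<chi> (g l \<circ> g j)"
proof -
  have G: "g l \<circ> g j \<in> S2inf" using S2inf_comp g_S2 assms by blast
  have d: "dd l \<in> S2inf" "dd l \<circ> dd l = id" using dd_S2 dd_invol assms by auto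
  have "\<chi> (tau \<circ> (g l \<circ> g j)) = \<chi> (dd l \<circ> ((g l \<circ> g j) \<circ> dd l))"
    using dd_conj[OF assms] by (simp add: comp_assoc)
  also have "\<dots> = \<chi> (((g l \<circ> g j) \<circ> dd l) \<circ> dd l)" using trace d(1) S2inf_comp[OF G d(1)] by blast
  also have "\<dots> = \<chi> (g l \<circ> g j)" using d(2) by (simp add: comp_assoc)
  finally show ?thesis .
qed

lemma cross:
  assumes aa: "aa \<in> S2inf" and l: "n < l" "k < l" and j: "n < j" "k < j" and lj: "l \<noteq> j"
  defines "w \<equiv> \<pi> tau (\<pi> aa \<xi>) - \<pi> aa \<xi>"
  shows "ip (\<pi> (g j) w) (\<pi> (g l) w) = 0"
proof -
  define G where "G = g l \<circ> g j"
  have gl: "g l \<in> S2inf" "g l \<circ> g l = id" using g_S2 g_invol l by auto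
  have gj: "g j \<in> S2inf" using g_S2 j by auto
  have G: "G \<in> S2inf" using S2inf_comp gl gj G_def by blast
  have ta: "tau \<circ> aa \<in> S2inf" using S2inf_comp tau_S2 aa by blast
  have Gt: "G \<circ> tau \<in> S2inf" using S2inf_comp tau_S2 G by blast
  have tG: "tau \<circ> G \<in> S2inf" using S2inf_comp tau_S2 G by blast
  have e0: "ip (\<pi> (g j) w) (\<pi> (g l) w) = ip (\<pi> (g l) (\<pi> (g j) w)) w"
    using invol_adj[OF gl] by simp
  have e1: "\<pi> (g l) (\<pi> (g j) w) = \<pi> G w" using pcomp' gl gj G_def by simp
  have e2: "\<pi> G w = \<pi> (G \<circ> (tau \<circ> aa)) \<xi> - \<pi> (G \<circ> aa) \<xi>"
    unfolding w_def using U_diff[OF G] pcomp'[OF G ta] pcomp'[OF G aa] pcomp'[OF tau_S2 aa] by simp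
  have e3: "w = \<pi> (tau \<circ> aa) \<xi> - \<pi> aa \<xi>" unfolding w_def using pcomp'[OF tau_S2 aa] by simp
  have e: "ip (\<pi> (g j) w) (\<pi> (g l) w) =
      ip (\<pi> (G \<circ> (tau \<circ> aa)) \<xi>) (\<pi> (tau \<circ> aa) \<xi>) - ip (\<pi> (G \<circ> (tau \<circ> aa)) \<xi>) (\<pi> aa \<xi>)
      - ip (\<pi> (G \<circ> aa) \<xi>) (\<pi> (tau \<circ> aa) \<xi>) + ip (\<pi> (G \<circ> aa) \<xi>) (\<pi> aa \<xi>)"
    unfolding e0 e1 e2 apply (subst e3) by (simp only: diff_l diff_r) (simp add: algebra_simps)
  have T1: "ip (\<pi> (G \<circ> (tau \<circ> aa)) \<xi>) (\<pi> (tau \<circ> aa) \<xi>) = \<chi> G" using L G ta by blast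
  have T2: "ip (\<pi> (G \<circ> (tau \<circ> aa)) \<xi>) (\<pi> aa \<xi>) = \<chi> (G \<circ> tau)"
    using L[OF Gt aa] by (simp add: comp_assoc)
  have tGc: "tau \<circ> G = G \<circ> tau" unfolding G_def
    using tau_g'[OF l] tau_g'[OF j] by (metis comp_assoc)
  have "(tau \<circ> G) \<circ> (tau \<circ> aa) = G \<circ> (tau \<circ> tau) \<circ> aa" unfolding tGc by (simp add: comp_assoc)
  then have "G \<circ> aa = (tau \<circ> G) \<circ> (tau \<circ> aa)" using tau_invol by simp
  then have T3: "ip (\<pi> (G \<circ> aa) \<xi>) (\<pi> (tau \<circ> aa) \<xi>) = \<chi> (tau \<circ> G)"
    using L[OF tG ta] by simp
  have T4: "ip (\<pi> (G \<circ> aa) \<xi>) (\<pi> aa \<xi>) = \<chi> G" using L G aa by blast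
  have c1: "\<chi> (tau \<circ> G) = \<chi> G" using chi_tauG l j lj G_def by simp
  have c2: "\<chi> (G \<circ> tau) = \<chi> G" using trace[OF G tau_S2] c1 by simp
  show ?thesis using e T1 T2 T3 T4 c1 c2 by simp
qed

end



context tsetting begin

lemma avg:
  assumes aa: "aa \<in> S2inf"
  defines "w \<equiv> \<pi> tau (\<pi> aa \<xi>) - \<pi> aa \<xi>"
  shows "ip (PA w) v = 0"
proof -
  define r where "r = ip (PA w) v"
  define W where "W = Re (ip w w)"
  define V where "V = Re (ip v v)"
  define K where "K = Suc (max n k)"
  have gi: "g (M + i) \<in> S2inf" "g (M + i) \<circ> g (M + i) = id" "n < M + i" "k < M + i"
    if "K \<le> M" for M i using that g_S2 g_invol unfolding K_def by auto
  have bound: "real N * (cmod r)^2 \<le> W * V" if N: "N \<ge> 1" for N :: nat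
  proof -
    define S where "S M = (\<Sum>i<N. \<pi> (g (M + i)) w)" for M
    have SS: "ip (S M) (S M) = of_nat N * ip w w" if M: "K \<le> M" for M
    proof -
      have "ip (S M) (S M) = (\<Sum>j<N. \<Sum>i<N. ip (\<pi> (g (M + i)) w) (\<pi> (g (M + j)) w))"
        unfolding S_def by (simp add: sum_l sum_r)
      also have "\<dots> = (\<Sum>j<N. \<Sum>i<N. (if i = j then ip w w else 0))"
      proof (intro sum.cong refl)
        fix j i
        show "ip (\<pi> (g (M + i)) w) (\<pi> (g (M + j)) w) = (if i = j then ip w w else 0)"
        proof (cases "i = j")
          case True then show ?thesis using U_ip gi[OF M] by simp
        next
          case False
          then show ?thesis using cross[OF aa gi(3,4)[OF M, of j] gi(3,4)[OF M, of i]] unfolding w_def by simp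
        qed
      qed
      also have "\<dots> = of_nat N * ip w w" by simp
      finally show ?thesis .
    qed
    have lim: "(\<lambda>M. ip (S M) v) \<longlonglongrightarrow> (\<Sum>i<N. r)"
    proof -
      have "(\<lambda>M. \<Sum>i<N. ip (\<pi> (g (M + i)) w) v) \<longlonglongrightarrow> (\<Sum>i<N. r)"
        unfolding r_def by (intro tendsto_sum) (rule LIMSEQ_ignore_initial_segment[OF wlim])
      then show ?thesis unfolding S_def by (simp add: sum_l)
    qed
    then have lim2: "(\<lambda>M. (cmod (ip (S M) v))^2) \<longlonglongrightarrow> (cmod (of_nat N * r))^2"
      by (intro tendsto_intros) simp
    have ev: "\<exists>M0. \<forall>M\<ge>M0. (cmod (ip (S M) v))^2 \<le> real N * W * V"
    proof (intro exI allI impI)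
      fix M assume M: "K \<le> M"
      have "(cmod (ip (S M) v))^2 \<le> Re (ip (S M) (S M)) * V" unfolding V_def by (rule CS)
      also have "\<dots> = real N * W * V" using SS[OF M] unfolding W_def by simp
      finally show "(cmod (ip (S M) v))^2 \<le> real N * W * V" .
    qed
    have "(cmod (of_nat N * r))^2 \<le> real N * W * V" using LIMSEQ_le_const2[OF lim2 ev] .
    then have "real N * (real N * (cmod r)^2) \<le> real N * (W * V)"
      by (simp add: norm_mult power_mult_distrib power2_eq_square algebra_simps)
    then show ?thesis using N by simp
  qed
  have WV: "W * V \<ge> 0" unfolding W_def V_def using pos by simp
  show ?thesis
  proof (rule ccontr)
    assume "ip (PA w) v \<noteq> 0"
    then have rp: "(cmod r)^2 > 0" unfolding r_def by simp
    obtain N :: nat where N: "W * V / (cmod r)^2 < real N" using reals_Archimedean2 by blast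
    have "N \<ge> 1" using N WV rp by (metis divide_nonneg_pos less_one not_le of_nat_0 order_le_less_trans less_irrefl)
    then have "real N * (cmod r)^2 \<le> W * V" using bound by blast
    moreover have "W * V < real N * (cmod r)^2" using N rp by (simp add: divide_less_eq)
    ultimately show False by simp
  qed
qed

end



context tsetting begin

lemma hnorm_nn: "hnorm ip x \<ge> 0" using pos by (simp add: hnorm_def)

lemma tau_PA: "\<pi> tau (PA u) = PA u"
proof (rule ext_eq)
  fix v
  define \<Phi> where "\<Phi> x = ip (PA (\<pi> tau x)) v - ip (PA x) v" for x
  have \<Phi>a: "\<Phi> (\<pi> aa \<xi>) = 0" if "aa \<in> S2inf" for aa
    using avg[OF that, of v] unfolding \<Phi>_def by (simp add: PA_diff)
  have \<Phi>z: "\<Phi> (\<Sum>i<m. sc (c i) (\<pi> (gg i) \<xi>)) = 0" if gg: "\<forall>i<m. gg i \<in> S2inf" for m c gg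
  proof -
    have "\<pi> tau (\<Sum>i<m. sc (c i) (\<pi> (gg i) \<xi>)) = (\<Sum>i<m. sc (c i) (\<pi> tau (\<pi> (gg i) \<xi>)))"
      using tau_S2 by (simp add: U_sum U_sc)
    then have "\<Phi> (\<Sum>i<m. sc (c i) (\<pi> (gg i) \<xi>)) = (\<Sum>i<m. c i * \<Phi> (\<pi> (gg i) \<xi>))"
      unfolding \<Phi>_def by (simp add: PA_comb sum_subtractf[symmetric] algebra_simps)
    also have "\<dots> = 0" using \<Phi>a gg by simp
    finally show ?thesis .
  qed
  have \<Phi>d: "\<Phi> (x - y) = \<Phi> x - \<Phi> y" for x y
    unfolding \<Phi>_def using tau_S2 by (simp add: U_diff PA_diff)
  have \<Phi>b: "cmod (\<Phi> x) \<le> 2 * hnorm ip x * hnorm ip v" for x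
  proof -
    have "cmod (\<Phi> x) \<le> cmod (ip (PA (\<pi> tau x)) v) + cmod (ip (PA x) v)"
      unfolding \<Phi>_def by (rule norm_triangle_ineq4)
    also have "\<dots> \<le> hnorm ip x * hnorm ip v + hnorm ip x * hnorm ip v"
      using PA_bound[of "\<pi> tau x" v] PA_bound[of x v] U_norm[OF tau_S2] by (intro add_mono) auto
    finally show ?thesis by (simp add: algebra_simps)
  qed
  have \<Phi>u: "\<Phi> u = 0"
  proof (rule ccontr)
    assume ne: "\<Phi> u \<noteq> 0"
    define e where "e = cmod (\<Phi> u) / (4 * (hnorm ip v + 1))"
    have hv: "hnorm ip v \<ge> 0" by (rule hnorm_nn)
    have ep: "e > 0" using ne hv unfolding e_def by (simp add: add_nonneg_pos)
    obtain m and gg :: "nat \<Rightarrow> perm" and c where gg: "\<forall>i<m. gg i \<in> S2inf" and z: "hnorm ip (u - (\<Sum>i<m. sc (c i) (\<pi> (gg i) \<xi>))) < e"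
      using dense[OF ep, of u] by blast
    define z where "z = (\<Sum>i<m. sc (c i) (\<pi> (gg i) \<xi>))"
    have "\<Phi> u = \<Phi> (u - z)" using \<Phi>d[of u z] \<Phi>z[OF gg] unfolding z_def by simp
    then have "cmod (\<Phi> u) \<le> 2 * hnorm ip (u - z) * hnorm ip v" using \<Phi>b by simp
    also have "\<dots> \<le> 2 * e * hnorm ip v" using z hv unfolding z_def
      by (intro mult_right_mono) auto
    also have "\<dots> < cmod (\<Phi> u)"
    proof -
      have "2 * e * hnorm ip v = cmod (\<Phi> u) * (hnorm ip v / (2 * (hnorm ip v + 1)))"
        unfolding e_def using hv by (simp add: field_simps)
      also have "\<dots> < cmod (\<Phi> u) * 1"
        using ne hv by (intro mult_strict_left_mono) (auto simp: field_simps)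
      finally show ?thesis by simp
    qed
    finally show False by simp
  qed
  have adj: "ip (PA u) (\<pi> tau v) = ip (PA (\<pi> tau u)) v"
  proof -
    have "(\<lambda>m. ip (\<pi> (g m) u) (\<pi> tau v)) \<longlonglongrightarrow> ip (PA (\<pi> tau u)) v"
    proof (rule Lim_transform_eventually[OF wlim])
      show "\<forall>\<^sub>F m in sequentially. ip (\<pi> (g m) (\<pi> tau u)) v = ip (\<pi> (g m) u) (\<pi> tau v)"
        unfolding eventually_sequentially
      proof (intro exI allI impI)
        fix m assume "Suc (max n k) \<le> m"
        then have m: "n < m" "k < m" by auto
        have gm: "g m \<in> S2inf" using g_S2 m by simp
        have "ip (\<pi> (g m) u) (\<pi> tau v) = ip (\<pi> tau (\<pi> (g m) u)) v"
          using invol_adj[OF tau_S2 tau_invol] by simp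
        also have "\<pi> tau (\<pi> (g m) u) = \<pi> (g m) (\<pi> tau u)"
          using pcomp'[OF tau_S2 gm] pcomp'[OF gm tau_S2] tau_g'[OF m] by metis
        finally show "ip (\<pi> (g m) (\<pi> tau u)) v = ip (\<pi> (g m) u) (\<pi> tau v)" by simp
      qed
    qed
    then show ?thesis using wlim LIMSEQ_unique by blast
  qed
  have "ip (\<pi> tau (PA u)) v = ip (PA u) (\<pi> tau v)" using invol_adj[OF tau_S2 tau_invol] by simp
  also have "\<dots> = ip (PA (\<pi> tau u)) v" by (rule adj)
  also have "\<dots> = ip (PA u) v" using \<Phi>u unfolding \<Phi>_def by simp
  finally show "ip (\<pi> tau (PA u)) v = ip (PA u) v" .
qed

end



context setting begin

lemma main_setting:
  assumes s: "s \<in> S2inf" and fx: "A \<subseteq> Fix s"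
  shows "\<pi> s \<circ> PA = PA"
proof -
  obtain n where "in_S2n n s" using s unfolding S2inf_def by blast
  then obtain \<sigma> where b: "bij_betw \<sigma> {xs. length xs = n} {xs. length xs = n}" and sl: "s = lift n \<sigma>"
    using in_S2n_lift by blast
  define Ss where "Ss = {xs. length xs = n \<and> (\<forall>x\<in>A. pre n x \<noteq> xs)}"
  define \<sigma>' where "\<sigma>' xs = (if length xs = n then \<sigma> xs else xs)" for xs
  have sl': "s = lift n \<sigma>'" unfolding sl by (rule lift_cong) (simp add: \<sigma>'_def)
  have len: "length xs = n \<Longrightarrow> length (\<sigma> xs) = n" for xs using b by (auto simp: bij_betw_def)
  have injs: "inj_on \<sigma> {xs. length xs = n}" using b by (simp add: bij_betw_def)
  have fixA: "\<sigma> (pre n x) = pre n x" if "x \<in> A" for x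
  proof -
    have "s x = x" using fx that unfolding Fix_def by blast
    then have "\<forall>i<n. \<sigma> (pre n x) ! i = x i" unfolding sl lift_def fun_eq_iff by metis
    then show ?thesis using len[of "pre n x"] by (intro nth_equalityI) auto
  qed
  have out: "\<sigma>' xs = xs" if nS: "xs \<notin> Ss" for xs
  proof (cases "length xs = n")
    case True
    then obtain x where "x \<in> A" "pre n x = xs" using nS unfolding Ss_def by blast
    then show ?thesis using fixA True unfolding \<sigma>'_def by auto
  next
    case False then show ?thesis unfolding \<sigma>'_def by simp
  qed
  have fin: "finite Ss"
  proof -
    have "finite {xs :: bool list. length xs = n}" using finite_lists_length_eq[of "UNIV::bool set" n] by simp
    then show ?thesis unfolding Ss_def by (rule rev_finite_subset) auto
  qed
  have io: "inj_on \<sigma>' Ss" using injs unfolding Ss_def \<sigma>'_def inj_on_def by auto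
  have im: "\<sigma>' ` Ss \<subseteq> Ss"
  proof
    fix ys assume "ys \<in> \<sigma>' ` Ss"
    then obtain xs where xs: "xs \<in> Ss" "ys = \<sigma> xs" unfolding \<sigma>'_def Ss_def by auto
    have ln: "length xs = n" using xs unfolding Ss_def by simp
    have "\<forall>x\<in>A. pre n x \<noteq> ys"
    proof (intro ballI notI)
      fix x assume x: "x \<in> A" "pre n x = ys"
      have "\<sigma> (pre n x) = \<sigma> xs" using fixA[OF x(1)] x(2) xs(2) by metis
      then have "pre n x = xs" using injs ln by (auto simp: inj_on_def)
      then show False using xs x unfolding Ss_def by blast
    qed
    then show "ys \<in> Ss" using len ln xs unfolding Ss_def by simp
  qed
  have "\<sigma>' ` Ss = Ss" using endo_inj_surj[OF fin im io] .
  then have "bij_betw \<sigma>' Ss Ss" using io by (simp add: bij_betw_def)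
  then have perm: "\<sigma>' permutes Ss" using bij_imp_permutes out by blast
  have "lift n \<sigma>' \<in> S2inf \<and> (\<forall>u. \<pi> (lift n \<sigma>') (PA u) = PA u)"
    using perm fin
  proof (induction rule: permutes_induct)
    case id
    have "lift n id = id" by (rule lift_id)
    then show ?case using S2inf_id pid by (simp add: id_def)
  next
    case (swap a b p)
    interpret T: tsetting sc ip \<pi> \<xi> \<chi> A PA k C n a b
      by unfold_locales (use swap.hyps(1,2) in \<open>auto simp: Ss_def\<close>)
    have lp: "length (p xs) = n" if "length xs = n" for xs
    proof (cases "xs \<in> Ss")
      case True then have "p xs \<in> Ss" using swap.hyps(4) permutes_in_image by metis
      then show ?thesis unfolding Ss_def by simp
    next
      case False then show ?thesis using swap.hyps(4) that by (simp add: permutes_not_in)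
    qed
    have eq: "lift n (transpose a b \<circ> p) = T.tau \<circ> lift n p"
      unfolding T.tau_def using lift_comp lp by blast
    have S2: "lift n p \<in> S2inf" using swap.IH by blast
    show ?case
    proof
      show "lift n (transpose a b \<circ> p) \<in> S2inf" unfolding eq using S2inf_comp T.tau_S2 S2 by blast
      show "\<forall>u. \<pi> (lift n (transpose a b \<circ> p)) (PA u) = PA u"
        unfolding eq using pcomp'[OF T.tau_S2 S2] swap.IH T.tau_PA by simp
    qed
  qed
  then show ?thesis unfolding sl'[symmetric] by (simp add: fun_eq_iff)
qed

end

theorem mainTheorem6:
  fixes sc :: "complex \<Rightarrow> 'h::ab_group_add \<Rightarrow> 'h"
    and ip :: "'h \<Rightarrow> 'h \<Rightarrow> complex"
    and \<pi> :: "perm \<Rightarrow> 'h \<Rightarrow> 'h"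
    and \<xi> :: 'h and \<chi> :: "perm \<Rightarrow> complex"
    and A :: "pt set" and s :: perm and PA :: "'h \<Rightarrow> 'h"
  assumes "indecomposable_character \<chi>"
    and "GNS_triple sc ip \<pi> \<xi> \<chi>"
    and "nice A"
    and "s \<in> S2inf"
    and "A \<subseteq> Fix s"
    and "weak_op_limit ip (\<lambda>m. \<pi> (sA A m)) PA"
  shows "\<pi> s \<circ> PA = PA"
proof -
  obtain k C where kc: "C \<subseteq> {xs :: bool list. length xs = k}" "A = {x. map x [0..<k] \<in> C}"
    using assms(3) unfolding nice_def by blast
  interpret S: setting sc ip \<pi> \<xi> \<chi> A PA k C
  proof unfold_locales
    show "complex_hilbert sc ip" using assms(2) unfolding GNS_triple_def by blast
    show "GNS_triple sc ip \<pi> \<xi> \<chi>" by (rule assms(2))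
    show "is_character \<chi>" using assms(1) unfolding indecomposable_character_def by blast
    show "A = {x. pre k x \<in> C}" using kc(2) by (simp add: pre_def)
    show "weak_op_limit ip (\<lambda>m. \<pi> (sA A m)) PA" by (rule assms(6))
  qed
  show ?thesis using S.main_setting assms(4,5) .
qed


end
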